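(* Let $\mathbf{X}$ be a zero-mean weakly stationary process with absolutely summable autocovariance and power spectral density $S_{xx}$, with $S_{xx}(\nu)>0$ for almost every $\nu\in\mathcal{I}$. Let $\mathbf{h}$ be a BIBO-stable impulse response ($\|\mathbf{h}\|_1<\infty$) whose transfer function $\widehat{h}$ satisfies $\widehat{h}(\nu)\neq 0$ for almost every $\nu$, with $1/|\widehat{h}|^2\in L^1(\mathcal{I})$, and such that $|\widehat{h}|$ is not (almost everywhere) constant. Let $\mathbf{Y}=\mathbf{h}*\mathbf{X}$, so that $S_{yy}=|\widehat{h}|^2S_{xx}$. Then $$\rho_{\mathbf{X}\to\mathbf{Y}}\,\rho_{\mathbf{Y}\to\mathbf{X}}<1 .$$ Moreover, if there exists $\alpha>0$ such that $|\widehat{h}(\nu)|^2\le (2-\alpha)\|\mathbf{h}\|_2^2$ for all $\nu\in\mathcal{I}$, then $$\rho_{\mathbf{X}\to\mathbf{Y}}\,\rho_{\mathbf{Y}\to\mathbf{X}}\le \left[1+\alpha\int_{\mathcal{I}}\left(\frac{|\widehat{h}(\nu)|^2-\|\mathbf{h}\|_2^2}{\|\mathbf{h}\|_2^2}\right)^2 d\nu\right]^{-1}<1 .$$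
   Context: $\mathcal{I}=[-1/2,1/2]$ and $\langle f\rangle=\int_{\mathcal{I}}f(\nu)\,d\nu$. For a sequence $\mathbf{a}=\{a_t\}_{t\in\mathbb{Z}}$, $\widehat{a}(\nu)=\sum_t a_t e^{-\mathbf{i}2\pi\nu t}$, $\|\mathbf{a}\|_2^2=\sum_t|a_t|^2$. The filter output is $\mathbf{Y}=\mathbf{h}*\mathbf{X}$, i.e. $Y_t=\sum_{\tau\in\mathbb{Z}}X_{t-\tau}h_\tau$. For a zero-mean weakly stationary process with autocovariance $C_{xx}(\tau)=\mathbb{E}[X_tX_{t+\tau}]$ (absolutely summable), the power spectral density is $S_{xx}=\widehat{C_{xx}}$. The spectral dependency ratios are $$\rho_{\mathbf{X}\to\mathbf{Y}}=\frac{\langle S_{yy}\rangle}{\langle S_{xx}\rangle\,\langle S_{yy}/S_{xx}\rangle},\qquad \rho_{\mathbf{Y}\to\mathbf{X}}=\frac{\langle S_{xx}\rangle}{\langle S_{yy}\rangle\,\langle S_{xx}/S_{yy}\rangle}.$$ *)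

theory Defs
  imports "HOL-Probability.Probability"
begin

definition freqI :: "real set" where
  "freqI = {-1/2..1/2}"

definition avgI :: "(real \<Rightarrow> real) \<Rightarrow> real" where
  "avgI f = (LBINT \<nu>:freqI. f \<nu>)"

definition dtft :: "(int \<Rightarrow> real) \<Rightarrow> real \<Rightarrow> complex" where
  "dtft a \<nu> = (\<Sum>\<^sub>\<infinity>t. complex_of_real (a t) * cis (- 2 * pi * \<nu> * of_int t))"

definition l2sq :: "(int \<Rightarrow> real) \<Rightarrow> real" where
  "l2sq a = (\<Sum>\<^sub>\<infinity>t. (a t)\<^sup>2)"

definition zero_mean_weakly_stationary ::
  "'a measure \<Rightarrow> (int \<Rightarrow> 'a \<Rightarrow> real) \<Rightarrow> (int \<Rightarrow> real) \<Rightarrow> bool" where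
  "zero_mean_weakly_stationary M X C \<longleftrightarrow>
     prob_space M \<and>
     (\<forall>t. X t \<in> borel_measurable M) \<and>
     (\<forall>t. integrable M (\<lambda>\<omega>. (X t \<omega>)\<^sup>2)) \<and>
     (\<forall>t. (\<integral>\<omega>. X t \<omega> \<partial>M) = 0) \<and>
     (\<forall>t \<tau>. (\<integral>\<omega>. X t \<omega> * X (t + \<tau>) \<omega> \<partial>M) = C \<tau>)"

text \<open>Power spectral density: S = Fourier transform of the autocovariance
  (real-valued since C is even; we take the real part).\<close>
definition psd :: "(int \<Rightarrow> real) \<Rightarrow> real \<Rightarrow> real" where
  "psd C \<nu> = Re (dtft C \<nu>)"

definition rho_XY :: "(real \<Rightarrow> real) \<Rightarrow> (real \<Rightarrow> real) \<Rightarrow> real" where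
  "rho_XY Sxx Syy = avgI Syy / (avgI Sxx * avgI (\<lambda>\<nu>. Syy \<nu> / Sxx \<nu>))"

definition rho_YX :: "(real \<Rightarrow> real) \<Rightarrow> (real \<Rightarrow> real) \<Rightarrow> real" where
  "rho_YX Sxx Syy = avgI Sxx / (avgI Syy * avgI (\<lambda>\<nu>. Sxx \<nu> / Syy \<nu>))"

end

theory Submission
  imports Defs
begin


definition ePart :: "(int \<Rightarrow> real) \<Rightarrow> int set \<Rightarrow> real \<Rightarrow> complex" where
  "ePart a F \<nu> = (\<Sum>t\<in>F. complex_of_real (a t) * cis (- 2 * pi * \<nu> * of_int t))"

lemma dtft_unif:
  assumes "(\<lambda>t. \<bar>a t\<bar>) summable_on UNIV"
  shows "uniform_limit UNIV (ePart a) (dtft a) (finite_subsets_at_top UNIV)"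
  unfolding ePart_def dtft_def[abs_def]
  by (rule Weierstrass_m_test_general[where M="\<lambda>t. \<bar>a t\<bar>"])
     (auto simp: norm_mult assms)

lemma ePart_cont: "continuous_on UNIV (ePart a F)"
  unfolding ePart_def by (intro continuous_intros)

lemma dtft_cont:
  assumes "(\<lambda>t. \<bar>a t\<bar>) summable_on UNIV"
  shows "continuous_on UNIV (dtft a)"
  by (rule uniform_limit_theorem[OF _ dtft_unif[OF assms]])
     (auto simp: ePart_cont finite_subsets_at_top_neq_bot)

lemma dtft_bound:
  assumes "(\<lambda>t. \<bar>a t\<bar>) summable_on UNIV"
  shows "norm (dtft a \<nu>) \<le> (\<Sum>\<^sub>\<infinity>t. \<bar>a t\<bar>)"
  unfolding dtft_def
proof (rule norm_infsum_le[OF has_sum_infsum has_sum_infsum[OF assms]])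
  show "(\<lambda>t. complex_of_real (a t) * cis (- 2 * pi * \<nu> * of_int t)) summable_on UNIV"
    by (rule abs_summable_summable) (simp add: norm_mult assms)
qed (simp add: norm_mult)

lemma cos_int_integral:
  "((\<lambda>\<nu>::real. cos (2*pi*\<nu>* of_int k)) has_integral (if k = 0 then 1 else 0)) {-1/2..1/2}"
proof (cases "k = 0")
  case True
  then show ?thesis using has_integral_const_real[of "1::real" "-1/2" "1/2"] by simp
next
  case False
  have "((\<lambda>\<nu>::real. cos (2*pi*\<nu>* of_int k)) has_integral
     (sin (2*pi*(1/2)* of_int k)/(2*pi* of_int k) - sin (2*pi*(-1/2)* of_int k)/(2*pi* of_int k))) {-1/2..1/2}"
  proof (rule fundamental_theorem_of_calculus)
    fix x :: real
    have "((\<lambda>\<nu>. sin (2*pi*\<nu>* of_int k)/(2*pi* of_int k)) has_real_derivative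
       cos (2*pi*x* of_int k) * (2*pi* of_int k) / (2*pi* of_int k)) (at x within {-1/2..1/2})"
      by (auto intro!: derivative_eq_intros)
    then show "((\<lambda>\<nu>. sin (2*pi*\<nu>* of_int k)/(2*pi* of_int k)) has_vector_derivative
       cos (2*pi*x* of_int k)) (at x within {-1/2..1/2})"
      using False by (simp add: has_real_derivative_iff_has_vector_derivative)
  qed simp
  moreover have "sin (2*pi*(1/2)* of_int k) = 0" "sin (2*pi*(-1/2)* of_int k) = 0"
    by (auto simp: sin_zero_iff_int2 intro: exI[of _ k] exI[of _ "-k"])
  ultimately show ?thesis using False by simp
qed

lemma ePart_sq:
  "(cmod (ePart a F \<nu>))\<^sup>2 = (\<Sum>s\<in>F. \<Sum>t\<in>F. a s * a t * cos (2*pi*\<nu>* of_int (t - s)))"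
proof -
  have "complex_of_real ((cmod (ePart a F \<nu>))\<^sup>2) = ePart a F \<nu> * cnj (ePart a F \<nu>)"
    by (rule complex_norm_square)
  also have "\<dots> = (\<Sum>s\<in>F. \<Sum>t\<in>F. complex_of_real (a s * a t) * cis (2*pi*\<nu>* of_int (t - s)))"
    unfolding ePart_def cnj_sum sum_product
    by (intro sum.cong refl) (simp add: cis_cnj cis_mult algebra_simps)
  finally have "(cmod (ePart a F \<nu>))\<^sup>2 = Re (\<Sum>s\<in>F. \<Sum>t\<in>F. complex_of_real (a s * a t) * cis (2*pi*\<nu>* of_int (t - s)))"
    by (metis Re_complex_of_real)
  also have "\<dots> = (\<Sum>s\<in>F. \<Sum>t\<in>F. a s * a t * cos (2*pi*\<nu>* of_int (t - s)))"
    by (simp add: Re_sum)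
  finally show ?thesis .
qed

lemma ePart_sq_integral:
  assumes "finite F"
  shows "((\<lambda>\<nu>. (cmod (ePart a F \<nu>))\<^sup>2) has_integral (\<Sum>t\<in>F. (a t)\<^sup>2)) {-1/2..1/2}"
proof -
  have "((\<lambda>\<nu>. \<Sum>s\<in>F. \<Sum>t\<in>F. a s * a t * cos (2*pi*\<nu>* of_int (t - s))) has_integral
        (\<Sum>s\<in>F. \<Sum>t\<in>F. a s * a t * (if t - s = 0 then 1 else 0))) {-1/2..1/2}"
    by (intro has_integral_sum assms has_integral_mult_right cos_int_integral)
  also have "(\<Sum>s\<in>F. \<Sum>t\<in>F. a s * a t * (if t - s = 0 then 1 else 0)) = (\<Sum>t\<in>F. (a t)\<^sup>2)"
  proof (intro sum.cong refl)
    fix s assume "s \<in> F"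
    have "(\<Sum>t\<in>F. a s * a t * (if t - s = 0 then 1 else 0)) = (\<Sum>t\<in>F. if t = s then a s * a t else 0)"
      by (intro sum.cong) auto
    also have "\<dots> = (a s)\<^sup>2" using \<open>s \<in> F\<close> assms by (simp add: power2_eq_square)
    finally show "(\<Sum>t\<in>F. a s * a t * (if t - s = 0 then 1 else 0)) = (a s)\<^sup>2" .
  qed
  finally show ?thesis by (simp add: ePart_sq)
qed

lemma sq_summable:
  fixes a :: "int \<Rightarrow> real"
  assumes A: "(\<lambda>t. \<bar>a t\<bar>) summable_on UNIV"
  shows "(\<lambda>t. (a t)\<^sup>2) summable_on UNIV"
proof -
  define B where "B = (\<Sum>\<^sub>\<infinity>t. \<bar>a t\<bar>)"
  show ?thesis
  proof (rule summable_on_comparison_test[where f="\<lambda>t. B * \<bar>a t\<bar>"])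
  show "(\<lambda>t. B * \<bar>a t\<bar>) summable_on UNIV" by (intro summable_on_cmult_right A)
  fix t :: int
  have "infsum (\<lambda>t. \<bar>a t\<bar>) {t} \<le> B" unfolding B_def
    by (rule infsum_mono_neutral) (auto simp: A)
  hence "\<bar>a t\<bar> \<le> B" by simp
  hence "\<bar>a t\<bar> * \<bar>a t\<bar> \<le> B * \<bar>a t\<bar>" by (metis abs_ge_zero mult_right_mono)
  thus "(a t)\<^sup>2 \<le> B * \<bar>a t\<bar>" by (metis abs_mult_self_eq power2_eq_square)
  qed simp
qed

lemma parseval:
  assumes A: "(\<lambda>t. \<bar>a t\<bar>) summable_on UNIV"
  shows "(LBINT \<nu>:freqI. (cmod (dtft a \<nu>))\<^sup>2) = l2sq a"
proof -
  define B where "B = (\<Sum>\<^sub>\<infinity>t. \<bar>a t\<bar>)"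
  have bnd: "bounded ((\<lambda>\<nu>. cmod (dtft a \<nu>)) ` S)" for S
    unfolding bounded_iff using dtft_bound[OF A] by (auto simp: B_def)
  have u0: "uniform_limit (cbox (-1/2) (1/2)) (\<lambda>F \<nu>. cmod (ePart a F \<nu>)) (\<lambda>\<nu>. cmod (dtft a \<nu>))
      (finite_subsets_at_top UNIV)"
    by (intro uniform_limit_norm uniform_limit_on_subset[OF dtft_unif[OF A]]) auto
  have u: "uniform_limit (cbox (-1/2) (1/2)) (\<lambda>F \<nu>. cmod (ePart a F \<nu>) * cmod (ePart a F \<nu>))
      (\<lambda>\<nu>. cmod (dtft a \<nu>) * cmod (dtft a \<nu>)) (finite_subsets_at_top UNIV)"
    by (intro uniform_lim_mult u0 bnd)
  have c: "continuous_on (cbox (-1/2) (1/2)) (\<lambda>\<nu>. cmod (ePart a F \<nu>) * cmod (ePart a F \<nu>))" for F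
    by (intro continuous_intros continuous_on_subset[OF ePart_cont]) auto
  obtain I J where I: "\<And>F. ((\<lambda>\<nu>. cmod (ePart a F \<nu>) * cmod (ePart a F \<nu>)) has_integral I F) (cbox (-1/2) (1/2))"
    and J: "((\<lambda>\<nu>. cmod (dtft a \<nu>) * cmod (dtft a \<nu>)) has_integral J) (cbox (-1/2) (1/2))"
    and lim: "(I \<longlongrightarrow> J) (finite_subsets_at_top UNIV)"
    using uniform_limit_integral_cbox[OF u c finite_subsets_at_top_neq_bot] by blast
  have IF: "\<forall>\<^sub>F F in finite_subsets_at_top UNIV. I F = (\<Sum>t\<in>F. (a t)\<^sup>2)"
  proof -
    have "I F = (\<Sum>t\<in>F. (a t)\<^sup>2)" if "finite F" for F
      using has_integral_unique[OF I[of F]] ePart_sq_integral[OF that, of a]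
      by (simp add: power2_eq_square)
    thus ?thesis by (intro eventually_finite_subsets_at_top_weakI) auto
  qed
  have lim2: "((\<lambda>F. \<Sum>t\<in>F. (a t)\<^sup>2) \<longlongrightarrow> l2sq a) (finite_subsets_at_top UNIV)"
    using has_sum_infsum[OF sq_summable[OF A]] unfolding l2sq_def has_sum_def .
  have "J = l2sq a"
    using tendsto_unique[OF finite_subsets_at_top_neq_bot lim Lim_transform_eventually[OF lim2]] IF
    by (metis (mono_tags, lifting) Lim_transform_eventually eventually_mono finite_subsets_at_top_neq_bot lim lim2 tendsto_unique)
  have cont: "continuous_on {-1/2..1/2} (\<lambda>\<nu>. (cmod (dtft a \<nu>))\<^sup>2)"
    by (intro continuous_intros continuous_on_subset[OF dtft_cont[OF A]]) auto
  have "(LBINT \<nu>:freqI. (cmod (dtft a \<nu>))\<^sup>2) = integral {-1/2..1/2} (\<lambda>\<nu>. (cmod (dtft a \<nu>))\<^sup>2)"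
    unfolding freqI_def by (rule set_borel_integral_eq_integral(2)[OF borel_integrable_atLeastAtMost'[OF cont]])
  also have "\<dots> = J" using J by (simp add: power2_eq_square integral_unique)
  finally show ?thesis using \<open>J = l2sq a\<close> by simp
qed



lemma freqI_measure: "measure lborel freqI = 1"
  unfolding freqI_def by simp

lemma cont_int: "continuous_on UNIV f \<Longrightarrow> set_integrable lborel freqI (f :: real \<Rightarrow> real)"
  unfolding freqI_def by (rule borel_integrable_atLeastAtMost') (rule continuous_on_subset, auto)

lemma avg_const: "avgI (\<lambda>_. k) = k"
  unfolding avgI_def freqI_def by (subst set_integral_const) auto

lemma avg_nonneg:
  assumes "set_integrable lborel freqI f" "AE \<nu> in lborel. \<nu> \<in> freqI \<longrightarrow> f \<nu> \<ge> 0"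
  shows "avgI f \<ge> 0"
  using assms unfolding avgI_def set_integrable_def set_lebesgue_integral_def
  by (intro integral_nonneg_AE) (auto elim!: eventually_mono simp: indicator_def)

lemma avg_zero:
  assumes "set_integrable lborel freqI f" "AE \<nu> in lborel. \<nu> \<in> freqI \<longrightarrow> f \<nu> \<ge> 0"
    "avgI f = 0"
  shows "AE \<nu> in lborel. \<nu> \<in> freqI \<longrightarrow> f \<nu> = 0"
proof -
  have "AE x in lborel. indicator freqI x *\<^sub>R f x = 0"
    using assms unfolding avgI_def set_integrable_def set_lebesgue_integral_def
    by (subst integral_nonneg_eq_0_iff_AE[symmetric]) (auto elim!: eventually_mono simp: indicator_def)
  then show ?thesis by (auto elim!: eventually_mono simp: indicator_def)
qed

lemma AE_freqI_False:
  assumes "AE \<nu> in lborel. \<nu> \<in> freqI \<longrightarrow> False"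
  shows False
proof -
  have "AE \<nu> in lborel. \<nu> \<notin> freqI" using assms by (auto elim!: eventually_mono)
  hence "emeasure lborel freqI = 0"
    by (subst (asm) AE_iff_measurable[of freqI]) (auto simp: freqI_def)
  thus False unfolding freqI_def by simp
qed

lemma avg_pos:
  assumes "set_integrable lborel freqI f" "AE \<nu> in lborel. \<nu> \<in> freqI \<longrightarrow> f \<nu> > 0"
  shows "avgI f > 0"
proof -
  have nn: "AE \<nu> in lborel. \<nu> \<in> freqI \<longrightarrow> f \<nu> \<ge> 0" using assms(2) by (auto elim!: eventually_mono)
  have "avgI f \<noteq> 0"
  proof
    assume "avgI f = 0"
    from avg_zero[OF assms(1) nn this] assms(2)
    have "AE \<nu> in lborel. \<nu> \<in> freqI \<longrightarrow> False" by eventually_elim auto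
    thus False by (rule AE_freqI_False)
  qed
  with avg_nonneg[OF assms(1) nn] show ?thesis by simp
qed

lemma avg_cong_AE:
  assumes "f \<in> borel_measurable borel" "g \<in> borel_measurable borel"
    "AE \<nu> in lborel. \<nu> \<in> freqI \<longrightarrow> f \<nu> = (g \<nu> :: real)"
  shows "avgI f = avgI g"
  unfolding avgI_def set_lebesgue_integral_def
  using assms
  by (intro integral_cong_AE) (auto elim!: eventually_mono simp: indicator_def freqI_def)



theorem mainTheorem1:
  fixes M :: "'a measure" and X :: "int \<Rightarrow> 'a \<Rightarrow> real"
    and C :: "int \<Rightarrow> real" and h :: "int \<Rightarrow> real"
  assumes X_ws: "zero_mean_weakly_stationary M X C"
    and C_abs: "(\<lambda>\<tau>. \<bar>C \<tau>\<bar>) summable_on UNIV"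
    and Sxx_pos: "AE \<nu> in lborel. \<nu> \<in> freqI \<longrightarrow> psd C \<nu> > 0"
    and h_bibo: "(\<lambda>t. \<bar>h t\<bar>) summable_on UNIV"
    and h_nz: "AE \<nu> in lborel. \<nu> \<in> freqI \<longrightarrow> dtft h \<nu> \<noteq> 0"
    and h_inv_L1: "set_integrable lborel freqI (\<lambda>\<nu>. 1 / (cmod (dtft h \<nu>))\<^sup>2)"
    and h_nonconst: "\<not> (\<exists>c. AE \<nu> in lborel. \<nu> \<in> freqI \<longrightarrow> cmod (dtft h \<nu>) = c)"
  defines "Sxx \<equiv> psd C"
    and "Syy \<equiv> (\<lambda>\<nu>. (cmod (dtft h \<nu>))\<^sup>2 * psd C \<nu>)"
  shows "rho_XY Sxx Syy * rho_YX Sxx Syy < 1 \<and>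
    (\<forall>\<alpha>>0. (\<forall>\<nu>\<in>freqI. (cmod (dtft h \<nu>))\<^sup>2 \<le> (2 - \<alpha>) * l2sq h) \<longrightarrow>
       rho_XY Sxx Syy * rho_YX Sxx Syy
         \<le> 1 / (1 + \<alpha> * (LBINT \<nu>:freqI. (((cmod (dtft h \<nu>))\<^sup>2 - l2sq h) / l2sq h)\<^sup>2))
     \<and> 1 / (1 + \<alpha> * (LBINT \<nu>:freqI. (((cmod (dtft h \<nu>))\<^sup>2 - l2sq h) / l2sq h)\<^sup>2)) < 1)"
proof -
  define g where "g = (\<lambda>\<nu>. (cmod (dtft h \<nu>))\<^sup>2)"
  define s where "s = psd C"
  have gc: "continuous_on UNIV g" unfolding g_def
    by (intro continuous_intros dtft_cont[OF h_bibo])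
  have sc: "continuous_on UNIV s" unfolding s_def psd_def[abs_def]
    by (intro continuous_intros dtft_cont[OF C_abs])
  have gm[measurable]: "g \<in> borel_measurable borel" by (rule borel_measurable_continuous_onI[OF gc])
  have sm[measurable]: "s \<in> borel_measurable borel" by (rule borel_measurable_continuous_onI[OF sc])
  have gpos: "AE \<nu> in lborel. \<nu> \<in> freqI \<longrightarrow> g \<nu> > 0"
    using h_nz by (auto elim!: eventually_mono simp: g_def)
  have spos: "AE \<nu> in lborel. \<nu> \<in> freqI \<longrightarrow> s \<nu> > 0"
    using Sxx_pos by (simp add: s_def)
  have gi: "set_integrable lborel freqI g" by (rule cont_int[OF gc])
  have si: "set_integrable lborel freqI s" by (rule cont_int[OF sc])
  have gsi: "set_integrable lborel freqI (\<lambda>\<nu>. g \<nu> * s \<nu>)"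
    by (rule cont_int) (intro continuous_intros gc sc)
  have ii: "set_integrable lborel freqI (\<lambda>\<nu>. 1 / g \<nu>)" using h_inv_L1 by (simp add: g_def)
  define c where "c = avgI g"
  have c_l2: "l2sq h = c" unfolding c_def avgI_def g_def by (rule parseval[OF h_bibo, symmetric])
  have cpos: "c > 0" unfolding c_def by (rule avg_pos[OF gi gpos])
  define K where "K = avgI (\<lambda>\<nu>. 1 / g \<nu>)"
  have A1: "avgI s > 0" by (rule avg_pos[OF si spos])
  have A2: "avgI (\<lambda>\<nu>. g \<nu> * s \<nu>) > 0"
    by (rule avg_pos[OF gsi]) (use gpos spos in \<open>eventually_elim, auto\<close>)
  have SyyE: "Syy = (\<lambda>\<nu>. g \<nu> * s \<nu>)" unfolding Syy_def g_def s_def ..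
  have SxxE: "Sxx = s" unfolding Sxx_def s_def ..
  have e1: "avgI (\<lambda>\<nu>. Syy \<nu> / Sxx \<nu>) = c"
    unfolding c_def SyyE SxxE
    by (rule avg_cong_AE) (use spos in \<open>auto elim!: eventually_mono\<close>)
  have e2: "avgI (\<lambda>\<nu>. Sxx \<nu> / Syy \<nu>) = K"
    unfolding K_def SyyE SxxE
    by (rule avg_cong_AE) (use spos in \<open>auto elim!: eventually_mono\<close>)
  have prod: "rho_XY Sxx Syy * rho_YX Sxx Syy = 1 / (c * K)"
    unfolding rho_XY_def rho_YX_def e1 e2
    unfolding SyyE SxxE
    using A1 A2 by (simp add: field_simps)
  define R where "R = (\<lambda>\<nu>. g \<nu> - 2 * c + c\<^sup>2 * (1 / g \<nu>))"
  have Ri: "set_integrable lborel freqI R" unfolding R_def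
    using gi ii cont_int[of "\<lambda>_. 2 * c"]
    by (intro set_integral_add set_integral_diff set_integrable_mult_right) auto
  have RQ: "AE \<nu> in lborel. \<nu> \<in> freqI \<longrightarrow> R \<nu> = (g \<nu> - c)\<^sup>2 / g \<nu>"
    using gpos by eventually_elim (auto simp: R_def field_simps power2_eq_square)
  have Rnn: "AE \<nu> in lborel. \<nu> \<in> freqI \<longrightarrow> R \<nu> \<ge> 0"
    using RQ gpos by eventually_elim auto
  have avgR: "avgI R = c\<^sup>2 * K - c"
  proof -
    have i2: "set_integrable lborel freqI (\<lambda>_. 2 * c)" by (rule cont_int) simp
    have i3: "set_integrable lborel freqI (\<lambda>\<nu>. c\<^sup>2 * (1 / g \<nu>))"
      by (rule set_integrable_mult_right[OF ii])
    have i4: "set_integrable lborel freqI (\<lambda>\<nu>. g \<nu> - 2 * c)"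
      by (rule set_integral_diff(1)[OF gi i2])
    have "avgI R = avgI (\<lambda>\<nu>. g \<nu> - 2 * c) + avgI (\<lambda>\<nu>. c\<^sup>2 * (1 / g \<nu>))"
      unfolding R_def avgI_def by (rule set_integral_add(2)[OF i4 i3])
    also have "avgI (\<lambda>\<nu>. g \<nu> - 2 * c) = avgI g - avgI (\<lambda>_. 2 * c)"
      unfolding avgI_def by (rule set_integral_diff(2)[OF gi i2])
    also have "avgI (\<lambda>\<nu>. c\<^sup>2 * (1 / g \<nu>)) = c\<^sup>2 * K"
      unfolding avgI_def K_def by (rule set_integral_mult_right)
    finally have "avgI R = avgI g - avgI (\<lambda>_. 2 * c) + c\<^sup>2 * K" .
    then show ?thesis by (simp add: avg_const c_def[symmetric] power2_eq_square)
  qed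
  have cK: "c * K = 1 + avgI R / c" using cpos by (simp add: avgR field_simps power2_eq_square)
  have noconst: False if "AE \<nu> in lborel. \<nu> \<in> freqI \<longrightarrow> g \<nu> = c"
  proof -
    have "AE \<nu> in lborel. \<nu> \<in> freqI \<longrightarrow> cmod (dtft h \<nu>) = sqrt c"
      using that by eventually_elim (auto simp: g_def)
    with h_nonconst show False by blast
  qed
  have Rpos: "avgI R > 0"
  proof -
    have "avgI R \<noteq> 0"
    proof
      assume "avgI R = 0"
      from avg_zero[OF Ri Rnn this] RQ gpos
      have "AE \<nu> in lborel. \<nu> \<in> freqI \<longrightarrow> g \<nu> = c" by eventually_elim auto
      thus False by (rule noconst)
    qed
    with avg_nonneg[OF Ri Rnn] show ?thesis by simp
  qed
  have part1: "rho_XY Sxx Syy * rho_YX Sxx Syy < 1"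
    unfolding prod cK using Rpos cpos by (simp add: field_simps)
  have part2: "rho_XY Sxx Syy * rho_YX Sxx Syy
         \<le> 1 / (1 + \<alpha> * (LBINT \<nu>:freqI. (((cmod (dtft h \<nu>))\<^sup>2 - l2sq h) / l2sq h)\<^sup>2))
     \<and> 1 / (1 + \<alpha> * (LBINT \<nu>:freqI. (((cmod (dtft h \<nu>))\<^sup>2 - l2sq h) / l2sq h)\<^sup>2)) < 1"
    if ap: "\<alpha> > 0" and hyp: "\<forall>\<nu>\<in>freqI. (cmod (dtft h \<nu>))\<^sup>2 \<le> (2 - \<alpha>) * l2sq h" for \<alpha>
  proof -
    have hyp': "\<And>\<nu>. \<nu> \<in> freqI \<Longrightarrow> g \<nu> \<le> (2 - \<alpha>) * c" using hyp c_l2 by (simp add: g_def)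
    define D where "D = (\<lambda>\<nu>. ((g \<nu> - c) / c)\<^sup>2)"
    define J where "J = avgI D"
    have JL: "(LBINT \<nu>:freqI. (((cmod (dtft h \<nu>))\<^sup>2 - l2sq h) / l2sq h)\<^sup>2) = J"
      unfolding J_def avgI_def D_def c_l2 g_def ..
    have Di: "set_integrable lborel freqI D" unfolding D_def
      using cpos by (intro cont_int continuous_intros gc) auto
    have Dnn: "AE \<nu> in lborel. \<nu> \<in> freqI \<longrightarrow> D \<nu> \<ge> 0" by (simp add: D_def)
    have a2: "\<alpha> < 2"
    proof (rule ccontr)
      assume "\<not> \<alpha> < 2"
      hence "(2 - \<alpha>) * c \<le> 0" using cpos by (intro mult_nonpos_nonneg) auto
      hence "\<And>\<nu>. \<nu> \<in> freqI \<Longrightarrow> g \<nu> \<le> 0" using hyp' by (meson order_trans)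
      hence "avgI g \<le> avgI (\<lambda>_. 0)" unfolding avgI_def
        using gi cont_int[of "\<lambda>_. 0"] by (intro set_integral_mono) auto
      thus False using cpos by (simp add: avg_const c_def)
    qed
    have J0: "J \<ge> 0" unfolding J_def by (rule avg_nonneg[OF Di Dnn])
    have Jpos: "J > 0"
    proof -
      have "J \<noteq> 0"
      proof
        assume "J = 0"
        from avg_zero[OF Di Dnn this[unfolded J_def]]
        have "AE \<nu> in lborel. \<nu> \<in> freqI \<longrightarrow> g \<nu> = c" by eventually_elim (use cpos in \<open>simp add: D_def\<close>)
        thus False by (rule noconst)
      qed
      with J0 show ?thesis by simp
    qed
    have pt: "AE \<nu> \<in> freqI in lborel. c / (2 - \<alpha>) * D \<nu> \<le> R \<nu>"
      using RQ gpos
    proof eventually_elim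
      case (elim \<nu>)
      show ?case
      proof
        assume nu: "\<nu> \<in> freqI"
        have gp: "g \<nu> > 0" and gl: "g \<nu> \<le> (2 - \<alpha>) * c" using elim nu hyp' by auto
        have "c / (2 - \<alpha>) * D \<nu> = (g \<nu> - c)\<^sup>2 / ((2 - \<alpha>) * c)"
          using cpos a2 by (simp add: D_def field_simps power2_eq_square)
        also have "\<dots> \<le> (g \<nu> - c)\<^sup>2 / g \<nu>"
          using gp gl cpos a2 by (intro divide_left_mono zero_le_power2 mult_pos_pos) auto
        finally show "c / (2 - \<alpha>) * D \<nu> \<le> R \<nu>" using elim nu by simp
      qed
    qed
    have "c / (2 - \<alpha>) * J \<le> avgI R"
      unfolding J_def avgI_def
      using set_integral_mono_AE[OF set_integrable_mult_right[OF Di] Ri pt]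
      by simp
    hence "J / (2 - \<alpha>) \<le> avgI R / c" using cpos by (simp add: field_simps)
    moreover have "\<alpha> * J \<le> J / (2 - \<alpha>)"
    proof -
      have "1 - \<alpha> * (2 - \<alpha>) = (\<alpha> - 1)\<^sup>2" by (simp add: power2_eq_square algebra_simps)
      hence "\<alpha> * (2 - \<alpha>) \<le> 1" using zero_le_power2[of "\<alpha> - 1"] by linarith
      hence "\<alpha> * (2 - \<alpha>) * J \<le> 1 * J" using J0 by (rule mult_right_mono)
      hence "\<alpha> * (2 - \<alpha>) * J \<le> J" by simp
      thus ?thesis using a2 by (simp add: field_simps)
    qed
    ultimately have "1 + \<alpha> * J \<le> c * K" unfolding cK by simp
    moreover have "1 + \<alpha> * J > 0" using ap J0 by (simp add: add_pos_nonneg)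
    ultimately have "1 / (c * K) \<le> 1 / (1 + \<alpha> * J)"
    proof -
      assume a: "1 + \<alpha> * J \<le> c * K" and b: "1 + \<alpha> * J > 0"
      have "0 < (c * K) * (1 + \<alpha> * J)" using mult_pos_pos[of "c * K" "1 + \<alpha> * J"] a b by linarith
      thus ?thesis using a by (intro divide_left_mono) auto
    qed
    moreover have "1 / (1 + \<alpha> * J) < 1"
    proof -
      have "1 < 1 + \<alpha> * J" using ap Jpos by (simp add: mult_pos_pos)
      thus ?thesis by simp
    qed
    ultimately show ?thesis unfolding JL prod by simp
  qed
  show ?thesis using part1 part2 by blast
qed

end
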